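(* There exists an $HS(3,K_4^{(3)}+e;16,6)$.
   Context: $K_4^{(3)}+e$ denotes the 3-uniform hypergraph with vertex set $\{1,2,3,4,5\}$ and edge set $\{\{1,2,3\},\{1,2,4\},\{1,3,4\},\{2,3,4\},\{3,4,5\}\}$. An $HS(3,K_4^{(3)}+e;v,s)$ is a collection of hypergraphs (blocks) on subsets of a $v$-set $V$, each isomorphic to $K_4^{(3)}+e$, whose edge sets partition the set of all 3-subsets of $V$ that are not contained in a fixed $s$-subset of $V$ (the hole). *)

theory Defs
  imports Main
begin

definition K4e_edges :: "nat set set" where
  "K4e_edges = {{1,2,3},{1,2,4},{1,3,4},{2,3,4},{3,4,5}}"

definition is_K4e_block :: "'a set \<Rightarrow> 'a set set \<Rightarrow> bool" where
  "is_K4e_block V E \<longleftrightarrow>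
     (\<exists>f. inj_on f {1..5::nat} \<and> f ` {1..5} \<subseteq> V \<and> E = (\<lambda>e. f ` e) ` K4e_edges)"

definition hole_triples :: "'a set \<Rightarrow> 'a set \<Rightarrow> 'a set set" where
  "hole_triples V S = {T. T \<subseteq> V \<and> card T = 3 \<and> \<not> T \<subseteq> S}"

text \<open>HS(3, K_4^(3)+e; v, s): a collection B of blocks (each given by its edge set)
  whose edge sets partition the 3-subsets of the v-set V not inside the s-subset S.\<close>
definition is_HS_K4e :: "'a set \<Rightarrow> 'a set \<Rightarrow> 'a set set set \<Rightarrow> nat \<Rightarrow> nat \<Rightarrow> bool" where
  "is_HS_K4e V S B v s \<longleftrightarrow>
     finite V \<and> card V = v \<and> S \<subseteq> V \<and> card S = s \<and>
     (\<forall>E\<in>B. is_K4e_block V E) \<and>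
     (\<forall>E1\<in>B. \<forall>E2\<in>B. E1 \<noteq> E2 \<longrightarrow> E1 \<inter> E2 = {}) \<and>
     \<Union>B = hole_triples V S"

end

theory Submission
  imports Defs
begin

fun merge :: "nat list \<Rightarrow> nat list \<Rightarrow> nat list" where
  "merge [] ys = ys"
| "merge xs [] = xs"
| "merge (x#xs) (y#ys) = (if x \<le> y then x # merge xs (y#ys) else y # merge (x#xs) ys)"

fun msort :: "nat list \<Rightarrow> nat list" where
  "msort xs = (if length xs \<le> 1 then xs else
     merge (msort (take (length xs div 2) xs)) (msort (drop (length xs div 2) xs)))"

declare msort.simps[simp del]

lemma set_merge: "set (merge xs ys) = set xs \<union> set ys"
  by (induction xs ys rule: merge.induct) auto

lemma length_merge: "length (merge xs ys) = length xs + length ys"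
  by (induction xs ys rule: merge.induct) auto

lemma set_length_msort: "set (msort xs) = set xs \<and> length (msort xs) = length xs"
proof (induction xs rule: msort.induct)
  case (1 xs)
  show ?case
  proof (cases "length xs \<le> 1")
    case True then show ?thesis by (simp add: msort.simps[of xs])
  next
    case False
    then have "msort xs = merge (msort (take (length xs div 2) xs)) (msort (drop (length xs div 2) xs))"
      by (simp add: msort.simps[of xs])
    then show ?thesis using 1 False
      by (simp add: set_merge length_merge flip: set_append)
  qed
qed

fun srt :: "nat \<times> nat \<times> nat \<Rightarrow> nat \<times> nat \<times> nat" where
  "srt (x,y,z) = (if x<y then (if y<z then (x,y,z) else if x<z then (x,z,y) else (z,x,y)) else (if x<z then (y,x,z) else if y<z then (y,z,x) else (z,y,x)))"
fun enc :: "nat \<times> nat \<times> nat \<Rightarrow> nat" where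
  "enc (a,b,c) = (a*16+b)*16+c"
fun edgesT :: "nat \<times> nat \<times> nat \<times> nat \<times> nat \<Rightarrow> (nat \<times> nat \<times> nat) list" where
  "edgesT (a,b,c,d,e) = [(a,b,c),(a,b,d),(a,c,d),(b,c,d),(c,d,e)]"
definition BL :: "(nat \<times> nat \<times> nat \<times> nat \<times> nat) list" where
  "BL = [(8,14,0,1,6), (0,1,11,13,9), (11,12,0,3,14), (0,8,4,11,9), (10,13,0,4,9), (0,15,4,12,14), (0,5,6,11,3), (5,12,0,7,4), (5,15,0,8,2), (5,9,0,13,3), (8,12,0,6,3), (0,10,6,9,2), (7,8,0,10,3), (2,6,1,14,10), (2,8,1,9,12), (3,6,1,15,13), (1,14,3,7,6), (8,13,1,3,12), (1,11,3,10,8), (1,4,11,15,13), (1,7,5,15,2), (8,10,1,6,7), (1,14,12,15,5), (3,12,2,8,6), (3,15,2,11,8), (4,11,2,6,3), (7,9,2,4,8), (2,6,5,10,11), (7,11,2,5,12), (2,8,14,15,11), (2,12,11,14,0), (4,8,3,15,5), (4,9,3,12,10), (5,13,3,11,9), (5,14,3,12,6), (3,14,6,13,11), (3,12,7,13,15), (3,8,11,14,1), (4,5,6,12,1), (10,15,4,5,8), (4,6,7,8,12), (4,11,12,13,1), (5,15,6,14,7), (5,14,7,8,2), (9,12,5,8,11), (5,9,11,15,6), (6,11,7,12,4), (10,14,6,11,8), (9,15,7,8,13), (9,14,7,12,1), (7,13,11,14,9), (10,13,8,11,9), (8,12,13,14,2), (10,13,9,14,0), (9,15,1,0,7), (1,0,10,12,8),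 (10,13,1,2,15), (1,9,5,10,8), (11,12,1,5,8), (1,14,5,13,15), (1,4,7,10,2), (4,13,1,6,5), (4,14,1,9,3), (4,8,1,12,2), (9,13,1,7,2), (1,11,7,8,3), (6,9,1,11,2), (3,7,0,15,11), (3,9,0,8,13), (2,7,0,14,12), (0,15,2,6,7), (9,12,0,2,13), (0,10,2,11,9), (0,5,10,14,12), (0,6,4,14,3), (9,11,0,7,6), (0,15,13,14,4), (2,13,3,9,7), (2,14,3,10,9), (5,10,3,7,2), (6,8,3,5,9), (3,7,4,11,10), (6,10,3,4,13), (3,9,15,14,10), (3,13,10,15,1), (5,9,2,14,4), (5,8,2,13,11), (4,12,2,10,8), (4,15,2,13,7), (2,15,7,12,10), (2,13,6,12,14), (2,9,10,15,0), (5,4,7,13,0), (11,14,5,4,9), (5,7,6,9,13), (5,10,13,12,0), (4,14,7,15,6), (4,15,6,9,3), (8,13,4,9,10), (4,8,10,14,7), (7,10,6,13,5), (11,15,7,10,9), (8,14,6,9,12), (8,15,6,13,0), (6,12,10,15,8), (11,12,9,10,8), (9,13,12,15,3), (11,12,8,15,1)]"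
definition AT :: "(nat \<times> nat \<times> nat) list" where
  "AT = concat (map (\<lambda>x. concat (map (\<lambda>y. map (\<lambda>z. (x,y,z)) (filter (\<lambda>z. 6 \<le> z) [Suc y..<16])) [Suc x..<16])) [0..<16])"
definition tri :: "nat \<times> nat \<times> nat \<Rightarrow> nat set" where
  "tri t = (case t of (x,y,z) \<Rightarrow> {x,y,z})"
fun good :: "nat \<times> nat \<times> nat \<Rightarrow> bool" where
  "good (x,y,z) = (distinct [x,y,z] \<and> x < 16 \<and> y < 16 \<and> z < 16)"
fun goodB :: "nat \<times> nat \<times> nat \<times> nat \<times> nat \<Rightarrow> bool" where
  "goodB (a,b,c,d,e) = (distinct [a,b,c,d,e] \<and> a < 16 \<and> b < 16 \<and> c < 16 \<and> d < 16 \<and> e < 16)"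

lemma c1: "map (enc \<circ> srt) (concat (map edgesT BL)) = [142, 398, 24, 30, 22, 27, 29, 189, 445, 2493, 188, 956, 59, 60, 62, 72, 139, 75, 1163, 1179, 173, 1197, 74, 77, 73, 79, 207, 76, 1231, 1230, 86, 91, 107, 1387, 875, 92, 1404, 87, 124, 71, 95, 1423, 88, 143, 40, 89, 1437, 93, 157, 61, 140, 1676, 104, 108, 54, 106, 154, 105, 1690, 617, 120, 1930, 122, 138, 58, 294, 622, 302, 366, 430, 296, 649, 297, 393, 412, 310, 879, 319, 367, 479, 318, 382, 311, 894, 871, 397, 909, 312, 317, 316, 315, 427, 314, 939, 906, 331, 335, 447, 1215, 3039, 343, 383, 351, 1407, 607, 394, 1674, 360, 362, 359, 462, 495, 463, 3311, 1487, 572, 908, 568, 652, 616, 575, 959, 571, 703, 651, 587, 1131, 582, 619, 566, 633, 1145, 583, 585, 584, 598, 618, 602, 1386, 1451, 635, 1403, 599, 603, 604, 654, 655, 751, 2287, 3055, 700, 718, 702, 3022, 190, 840, 1167, 847, 911, 863, 841, 1180, 844, 924, 940, 861, 1469, 859, 957, 923, 862, 1486, 860, 974, 876, 878, 990, 877, 1758, 1725, 892, 973, 893, 1997, 2015, 907, 910, 958, 2238, 446, 1110, 1116, 1132, 1388, 364, 1199, 1455, 1114, 1119, 1112, 1127, 1128, 1144, 1656, 1932, 1212, 1213, 1229, 3021, 461, 1391, 1519, 1390, 1775, 1662, 1406, 1422, 1400, 1934, 632, 1436, 2204, 1417, 1420, 1419, 1435, 1439, 1471, 2495, 1727, 1659,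 1724, 1660, 1980, 1148, 1710, 2750, 1707, 1726, 1675, 1951, 2207, 1929, 1935, 1933, 1950, 2510, 1948, 1998, 380, 1981, 2014, 1982, 3038, 2494, 2221, 2749, 2219, 2237, 2203, 2253, 2254, 2270, 3294, 734, 2477, 2782, 2478, 2526, 158, 415, 159, 25, 31, 23, 26, 28, 428, 172, 2220, 429, 685, 298, 301, 303, 345, 410, 346, 1434, 1418, 444, 1468, 347, 348, 344, 350, 478, 349, 1502, 1503, 327, 330, 378, 1146, 634, 333, 1133, 326, 365, 342, 334, 1182, 329, 414, 313, 328, 1164, 332, 396, 300, 413, 1949, 377, 381, 295, 379, 395, 376, 1931, 888, 361, 1691, 363, 411, 299, 55, 895, 63, 127, 191, 57, 905, 56, 137, 141, 39, 638, 46, 126, 206, 47, 111, 38, 623, 615, 156, 668, 41, 44, 45, 42, 171, 43, 683, 667, 90, 94, 174, 1454, 2766, 70, 110, 78, 1134, 846, 155, 1947, 121, 123, 103, 223, 239, 222, 3567, 1246, 573, 669, 569, 925, 889, 574, 686, 570, 942, 922, 858, 1402, 855, 890, 567, 872, 1384, 854, 856, 857, 839, 891, 843, 1147, 1195, 874, 1130, 838, 842, 845, 927, 926, 1007, 2543, 2799, 941, 991, 943, 2783, 431, 601, 1438, 606, 670, 590, 600, 1421, 605, 653, 701, 588, 1196, 586, 684, 650, 591, 1247, 589, 735, 637, 639, 719, 636, 1999, 1964, 621, 717, 620, 1741, 1742, 666, 671, 687, 2479, 175, 1111, 1117, 1405, 1149, 125, 1470, 1214, 1115, 1118, 1113, 1383,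 1401, 1385, 1657, 1693, 1453, 1452, 1485, 2765, 205, 1150, 1263, 1151, 2031, 1663, 1135, 1183, 1129, 1695, 873, 1165, 2205, 1161, 1181, 1178, 1162, 1166, 1198, 2222, 1966, 1658, 1965, 1661, 1709, 1389, 1983, 2751, 1963, 1967, 1946, 1678, 2206, 1673, 1694, 1692, 1679, 2271, 1677, 1759, 109, 1708, 1743, 1711, 2767, 2223, 2492, 2748, 2475, 2476, 2202, 2509, 2527, 2511, 3295, 975, 2236, 3023, 2239, 2255, 399]"
  by (simp add: BL_def)

lemma c2: "msort [142, 398, 24, 30, 22, 27, 29, 189, 445, 2493, 188, 956, 59, 60, 62, 72, 139, 75, 1163, 1179, 173, 1197, 74, 77, 73, 79, 207, 76, 1231, 1230, 86, 91, 107, 1387, 875, 92, 1404, 87, 124, 71, 95, 1423, 88, 143, 40, 89, 1437, 93, 157, 61, 140, 1676, 104, 108, 54, 106, 154, 105, 1690, 617, 120, 1930, 122, 138, 58, 294, 622, 302, 366, 430, 296, 649, 297, 393, 412, 310, 879, 319, 367, 479, 318, 382, 311, 894, 871, 397, 909, 312, 317, 316, 315, 427, 314, 939, 906, 331, 335, 447, 1215, 3039, 343, 383, 351, 1407, 607, 394, 1674, 360, 362, 359, 462, 495, 463, 3311, 1487, 572, 908, 568, 652, 616, 575, 959, 571, 703, 651, 587, 1131, 582, 619, 566, 633, 1145, 583, 585, 584, 598, 618, 602, 1386, 1451, 635, 1403, 599, 603, 604, 654, 655, 751, 2287, 3055, 700, 718, 702, 3022, 190, 840, 1167, 847, 911,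 863, 841, 1180, 844, 924, 940, 861, 1469, 859, 957, 923, 862, 1486, 860, 974, 876, 878, 990, 877, 1758, 1725, 892, 973, 893, 1997, 2015, 907, 910, 958, 2238, 446, 1110, 1116, 1132, 1388, 364, 1199, 1455, 1114, 1119, 1112, 1127, 1128, 1144, 1656, 1932, 1212, 1213, 1229, 3021, 461, 1391, 1519, 1390, 1775, 1662, 1406, 1422, 1400, 1934, 632, 1436, 2204, 1417, 1420, 1419, 1435, 1439, 1471, 2495, 1727, 1659, 1724, 1660, 1980, 1148, 1710, 2750, 1707, 1726, 1675, 1951, 2207, 1929, 1935, 1933, 1950, 2510, 1948, 1998, 380, 1981, 2014, 1982, 3038, 2494, 2221, 2749, 2219, 2237, 2203, 2253, 2254, 2270, 3294, 734, 2477, 2782, 2478, 2526, 158, 415, 159, 25, 31, 23, 26, 28, 428, 172, 2220, 429, 685, 298, 301, 303, 345, 410, 346, 1434, 1418, 444, 1468, 347, 348, 344, 350, 478, 349, 1502, 1503, 327, 330, 378, 1146, 634, 333, 1133, 326, 365, 342, 334, 1182, 329, 414, 313, 328, 1164, 332, 396, 300, 413, 1949, 377, 381, 295, 379, 395, 376, 1931, 888, 361, 1691, 363, 411, 299, 55, 895, 63, 127, 191, 57, 905, 56, 137, 141, 39, 638, 46, 126, 206, 47, 111, 38, 623, 615, 156, 668, 41, 44, 45, 42, 171, 43, 683, 667, 90, 94, 174, 1454, 2766, 70, 110, 78, 1134, 846, 155, 1947, 121, 123, 103, 223, 239, 222, 3567, 1246, 573, 669, 569, 925, 889, 574, 686,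 570, 942, 922, 858, 1402, 855, 890, 567, 872, 1384, 854, 856, 857, 839, 891, 843, 1147, 1195, 874, 1130, 838, 842, 845, 927, 926, 1007, 2543, 2799, 941, 991, 943, 2783, 431, 601, 1438, 606, 670, 590, 600, 1421, 605, 653, 701, 588, 1196, 586, 684, 650, 591, 1247, 589, 735, 637, 639, 719, 636, 1999, 1964, 621, 717, 620, 1741, 1742, 666, 671, 687, 2479, 175, 1111, 1117, 1405, 1149, 125, 1470, 1214, 1115, 1118, 1113, 1383, 1401, 1385, 1657, 1693, 1453, 1452, 1485, 2765, 205, 1150, 1263, 1151, 2031, 1663, 1135, 1183, 1129, 1695, 873, 1165, 2205, 1161, 1181, 1178, 1162, 1166, 1198, 2222, 1966, 1658, 1965, 1661, 1709, 1389, 1983, 2751, 1963, 1967, 1946, 1678, 2206, 1673, 1694, 1692, 1679, 2271, 1677, 1759, 109, 1708, 1743, 1711, 2767, 2223, 2492, 2748, 2475, 2476, 2202, 2509, 2527, 2511, 3295, 975, 2236, 3023, 2239, 2255, 399] = [22, 23, 24, 25, 26, 27, 28, 29, 30, 31, 38, 39, 40, 41, 42, 43, 44, 45, 46, 47, 54, 55, 56, 57, 58, 59, 60, 61, 62, 63, 70, 71, 72, 73, 74, 75, 76, 77, 78, 79, 86, 87, 88, 89, 90, 91, 92, 93, 94, 95, 103, 104, 105, 106, 107, 108, 109, 110, 111, 120, 121, 122, 123, 124, 125, 126, 127, 137, 138, 139, 140, 141, 142, 143, 154, 155, 156, 157, 158, 159, 171, 172, 173, 174, 175, 188, 189, 190,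 191, 205, 206, 207, 222, 223, 239, 294, 295, 296, 297, 298, 299, 300, 301, 302, 303, 310, 311, 312, 313, 314, 315, 316, 317, 318, 319, 326, 327, 328, 329, 330, 331, 332, 333, 334, 335, 342, 343, 344, 345, 346, 347, 348, 349, 350, 351, 359, 360, 361, 362, 363, 364, 365, 366, 367, 376, 377, 378, 379, 380, 381, 382, 383, 393, 394, 395, 396, 397, 398, 399, 410, 411, 412, 413, 414, 415, 427, 428, 429, 430, 431, 444, 445, 446, 447, 461, 462, 463, 478, 479, 495, 566, 567, 568, 569, 570, 571, 572, 573, 574, 575, 582, 583, 584, 585, 586, 587, 588, 589, 590, 591, 598, 599, 600, 601, 602, 603, 604, 605, 606, 607, 615, 616, 617, 618, 619, 620, 621, 622, 623, 632, 633, 634, 635, 636, 637, 638, 639, 649, 650, 651, 652, 653, 654, 655, 666, 667, 668, 669, 670, 671, 683, 684, 685, 686, 687, 700, 701, 702, 703, 717, 718, 719, 734, 735, 751, 838, 839, 840, 841, 842, 843, 844, 845, 846, 847, 854, 855, 856, 857, 858, 859, 860, 861, 862, 863, 871, 872, 873, 874, 875, 876, 877, 878, 879, 888, 889, 890, 891, 892, 893, 894, 895, 905, 906, 907, 908, 909, 910, 911, 922, 923, 924, 925, 926, 927, 939, 940, 941, 942, 943, 956, 957, 958, 959, 973, 974, 975, 990, 991, 1007, 1110, 1111, 1112, 1113, 1114, 1115, 1116, 1117, 1118, 1119, 1127, 1128, 1129, 1130, 1131, 1132, 1133, 1134, 1135, 1144, 1145, 1146, 1147, 1148, 1149, 1150,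 1151, 1161, 1162, 1163, 1164, 1165, 1166, 1167, 1178, 1179, 1180, 1181, 1182, 1183, 1195, 1196, 1197, 1198, 1199, 1212, 1213, 1214, 1215, 1229, 1230, 1231, 1246, 1247, 1263, 1383, 1384, 1385, 1386, 1387, 1388, 1389, 1390, 1391, 1400, 1401, 1402, 1403, 1404, 1405, 1406, 1407, 1417, 1418, 1419, 1420, 1421, 1422, 1423, 1434, 1435, 1436, 1437, 1438, 1439, 1451, 1452, 1453, 1454, 1455, 1468, 1469, 1470, 1471, 1485, 1486, 1487, 1502, 1503, 1519, 1656, 1657, 1658, 1659, 1660, 1661, 1662, 1663, 1673, 1674, 1675, 1676, 1677, 1678, 1679, 1690, 1691, 1692, 1693, 1694, 1695, 1707, 1708, 1709, 1710, 1711, 1724, 1725, 1726, 1727, 1741, 1742, 1743, 1758, 1759, 1775, 1929, 1930, 1931, 1932, 1933, 1934, 1935, 1946, 1947, 1948, 1949, 1950, 1951, 1963, 1964, 1965, 1966, 1967, 1980, 1981, 1982, 1983, 1997, 1998, 1999, 2014, 2015, 2031, 2202, 2203, 2204, 2205, 2206, 2207, 2219, 2220, 2221, 2222, 2223, 2236, 2237, 2238, 2239, 2253, 2254, 2255, 2270, 2271, 2287, 2475, 2476, 2477, 2478, 2479, 2492, 2493, 2494, 2495, 2509, 2510, 2511, 2526, 2527, 2543, 2748, 2749, 2750, 2751, 2765, 2766, 2767, 2782, 2783, 2799, 3021, 3022, 3023, 3038, 3039, 3055, 3294, 3295, 3311, 3567]"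
  by (simp add: msort.simps[of "_#_#_"] msort.simps[of "[_]"])

lemma c3: "map enc AT = [22, 23, 24, 25, 26, 27, 28, 29, 30, 31, 38, 39, 40, 41, 42, 43, 44, 45, 46, 47, 54, 55, 56, 57, 58, 59, 60, 61, 62, 63, 70, 71, 72, 73, 74, 75, 76, 77, 78, 79, 86, 87, 88, 89, 90, 91, 92, 93, 94, 95, 103, 104, 105, 106, 107, 108, 109, 110, 111, 120, 121, 122, 123, 124, 125, 126, 127, 137, 138, 139, 140, 141, 142, 143, 154, 155, 156, 157, 158, 159, 171, 172, 173, 174, 175, 188, 189, 190, 191, 205, 206, 207, 222, 223, 239, 294, 295, 296, 297, 298, 299, 300, 301, 302, 303, 310, 311, 312, 313, 314, 315, 316, 317, 318, 319, 326, 327, 328, 329, 330, 331, 332, 333, 334, 335, 342, 343, 344, 345, 346, 347, 348, 349, 350, 351, 359, 360, 361, 362, 363, 364, 365, 366, 367, 376, 377, 378, 379, 380, 381, 382, 383, 393, 394, 395, 396, 397, 398, 399, 410, 411, 412, 413, 414, 415, 427, 428, 429, 430, 431, 444, 445, 446, 447, 461, 462, 463, 478, 479, 495, 566, 567, 568, 569, 570, 571, 572, 573, 574, 575, 582, 583, 584, 585, 586, 587, 588, 589, 590, 591, 598, 599, 600, 601, 602, 603, 604, 605, 606, 607, 615, 616, 617, 618, 619, 620, 621, 622, 623, 632, 633, 634, 635, 636, 637, 638, 639, 649, 650, 651, 652, 653, 654, 655, 666, 667, 668, 669, 670, 671, 683, 684, 685, 686, 687, 700, 701, 702, 703, 717,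 718, 719, 734, 735, 751, 838, 839, 840, 841, 842, 843, 844, 845, 846, 847, 854, 855, 856, 857, 858, 859, 860, 861, 862, 863, 871, 872, 873, 874, 875, 876, 877, 878, 879, 888, 889, 890, 891, 892, 893, 894, 895, 905, 906, 907, 908, 909, 910, 911, 922, 923, 924, 925, 926, 927, 939, 940, 941, 942, 943, 956, 957, 958, 959, 973, 974, 975, 990, 991, 1007, 1110, 1111, 1112, 1113, 1114, 1115, 1116, 1117, 1118, 1119, 1127, 1128, 1129, 1130, 1131, 1132, 1133, 1134, 1135, 1144, 1145, 1146, 1147, 1148, 1149, 1150, 1151, 1161, 1162, 1163, 1164, 1165, 1166, 1167, 1178, 1179, 1180, 1181, 1182, 1183, 1195, 1196, 1197, 1198, 1199, 1212, 1213, 1214, 1215, 1229, 1230, 1231, 1246, 1247, 1263, 1383, 1384, 1385, 1386, 1387, 1388, 1389, 1390, 1391, 1400, 1401, 1402, 1403, 1404, 1405, 1406, 1407, 1417, 1418, 1419, 1420, 1421, 1422, 1423, 1434, 1435, 1436, 1437, 1438, 1439, 1451, 1452, 1453, 1454, 1455, 1468, 1469, 1470, 1471, 1485, 1486, 1487, 1502, 1503, 1519, 1656, 1657, 1658, 1659, 1660, 1661, 1662, 1663, 1673, 1674, 1675, 1676, 1677, 1678, 1679, 1690, 1691, 1692, 1693, 1694, 1695, 1707, 1708, 1709, 1710, 1711, 1724, 1725, 1726, 1727, 1741, 1742, 1743, 1758, 1759, 1775, 1929, 1930, 1931, 1932, 1933, 1934, 1935, 1946, 1947, 1948, 1949, 1950,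 1951, 1963, 1964, 1965, 1966, 1967, 1980, 1981, 1982, 1983, 1997, 1998, 1999, 2014, 2015, 2031, 2202, 2203, 2204, 2205, 2206, 2207, 2219, 2220, 2221, 2222, 2223, 2236, 2237, 2238, 2239, 2253, 2254, 2255, 2270, 2271, 2287, 2475, 2476, 2477, 2478, 2479, 2492, 2493, 2494, 2495, 2509, 2510, 2511, 2526, 2527, 2543, 2748, 2749, 2750, 2751, 2765, 2766, 2767, 2782, 2783, 2799, 3021, 3022, 3023, 3038, 3039, 3055, 3294, 3295, 3311, 3567]"
  by (simp add: AT_def upt_rec)

lemma c4: "sorted_wrt (<) ([22, 23, 24, 25, 26, 27, 28, 29, 30, 31, 38, 39, 40, 41, 42, 43, 44, 45, 46, 47, 54, 55, 56, 57, 58, 59, 60, 61, 62, 63, 70, 71, 72, 73, 74, 75, 76, 77, 78, 79, 86, 87, 88, 89, 90, 91, 92, 93, 94, 95, 103, 104, 105, 106, 107, 108, 109, 110, 111, 120, 121, 122, 123, 124, 125, 126, 127, 137, 138, 139, 140, 141, 142, 143, 154, 155, 156, 157, 158, 159, 171, 172, 173, 174, 175, 188, 189, 190, 191, 205, 206, 207, 222, 223, 239, 294, 295, 296, 297, 298, 299, 300, 301, 302, 303, 310, 311, 312, 313, 314, 315, 316, 317, 318, 319, 326, 327, 328, 329, 330, 331, 332, 333, 334, 335, 342, 343, 344, 345, 346, 347, 348, 349, 350, 351, 359, 360, 361, 362, 363, 364, 365, 366, 367, 376, 377, 378, 379, 380, 381, 382, 383, 393, 394, 395, 396, 397, 398,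 399, 410, 411, 412, 413, 414, 415, 427, 428, 429, 430, 431, 444, 445, 446, 447, 461, 462, 463, 478, 479, 495, 566, 567, 568, 569, 570, 571, 572, 573, 574, 575, 582, 583, 584, 585, 586, 587, 588, 589, 590, 591, 598, 599, 600, 601, 602, 603, 604, 605, 606, 607, 615, 616, 617, 618, 619, 620, 621, 622, 623, 632, 633, 634, 635, 636, 637, 638, 639, 649, 650, 651, 652, 653, 654, 655, 666, 667, 668, 669, 670, 671, 683, 684, 685, 686, 687, 700, 701, 702, 703, 717, 718, 719, 734, 735, 751, 838, 839, 840, 841, 842, 843, 844, 845, 846, 847, 854, 855, 856, 857, 858, 859, 860, 861, 862, 863, 871, 872, 873, 874, 875, 876, 877, 878, 879, 888, 889, 890, 891, 892, 893, 894, 895, 905, 906, 907, 908, 909, 910, 911, 922, 923, 924, 925, 926, 927, 939, 940, 941, 942, 943, 956, 957, 958, 959, 973, 974, 975, 990, 991, 1007, 1110, 1111, 1112, 1113, 1114, 1115, 1116, 1117, 1118, 1119, 1127, 1128, 1129, 1130, 1131, 1132, 1133, 1134, 1135, 1144, 1145, 1146, 1147, 1148, 1149, 1150, 1151, 1161, 1162, 1163, 1164, 1165, 1166, 1167, 1178, 1179, 1180, 1181, 1182, 1183, 1195, 1196, 1197, 1198, 1199, 1212, 1213, 1214, 1215, 1229, 1230, 1231, 1246, 1247, 1263, 1383, 1384, 1385, 1386, 1387, 1388, 1389, 1390, 1391, 1400, 1401, 1402, 1403, 1404, 1405, 1406, 1407, 1417, 1418, 1419, 1420, 1421, 1422, 1423,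 1434, 1435, 1436, 1437, 1438, 1439, 1451, 1452, 1453, 1454, 1455, 1468, 1469, 1470, 1471, 1485, 1486, 1487, 1502, 1503, 1519, 1656, 1657, 1658, 1659, 1660, 1661, 1662, 1663, 1673, 1674, 1675, 1676, 1677, 1678, 1679, 1690, 1691, 1692, 1693, 1694, 1695, 1707, 1708, 1709, 1710, 1711, 1724, 1725, 1726, 1727, 1741, 1742, 1743, 1758, 1759, 1775, 1929, 1930, 1931, 1932, 1933, 1934, 1935, 1946, 1947, 1948, 1949, 1950, 1951, 1963, 1964, 1965, 1966, 1967, 1980, 1981, 1982, 1983, 1997, 1998, 1999, 2014, 2015, 2031, 2202, 2203, 2204, 2205, 2206, 2207, 2219, 2220, 2221, 2222, 2223, 2236, 2237, 2238, 2239, 2253, 2254, 2255, 2270, 2271, 2287, 2475, 2476, 2477, 2478, 2479, 2492, 2493, 2494, 2495, 2509, 2510, 2511, 2526, 2527, 2543, 2748, 2749, 2750, 2751, 2765, 2766, 2767, 2782, 2783, 2799, 3021, 3022, 3023, 3038, 3039, 3055, 3294, 3295, 3311, 3567] :: nat list)"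
  by (simp del: sorted_wrt.simps add: sorted_wrt2 transp_on_less sorted_wrt1)

lemma c5: "list_all good (concat (map edgesT BL))"
  by (simp add: BL_def)

lemma c6: "list_all goodB BL"
  by (simp add: BL_def)

lemma chk: "msort (map (enc \<circ> srt) (concat (map edgesT BL))) = map enc AT"
  unfolding c1 c2 c3 by (rule refl)

lemma sw_distinct: "sorted_wrt (<) (xs::nat list) \<Longrightarrow> distinct xs"
  by (simp add: strict_sorted_iff)

lemma distinct_AT: "distinct (map enc AT)"
  unfolding c3 by (rule sw_distinct[OF c4])

lemma srt_good: "good t \<Longrightarrow> srt t = (a,b,c) \<Longrightarrow> a<b \<and> b<c \<and> c<16 \<and> tri (a,b,c) = tri t"
proof -
  assume g: "good t" and s: "srt t = (a,b,c)"
  obtain x y z where t: "t = (x,y,z)" by (cases t) auto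
  show ?thesis
  proof (cases "x<y")
    case True
    then show ?thesis using g s t
      by (cases "y<z"; cases "x<z") (auto simp: tri_def insert_commute)
  next
    case False
    then show ?thesis using g s t
      by (cases "y<z"; cases "x<z") (auto simp: tri_def insert_commute)
  qed
qed

lemma dm16: "c < (16::nat) \<Longrightarrow> (x*16+c) div 16 = x \<and> (x*16+c) mod 16 = c"
  by simp

lemma enc_inj: "b<(16::nat) \<Longrightarrow> c<16 \<Longrightarrow> b'<16 \<Longrightarrow> c'<16 \<Longrightarrow> enc(a,b,c) = enc(a',b',c') \<Longrightarrow> (a,b,c)=(a',b',c')"
  by (metis dm16 enc.simps)

lemma sorted_tri_eq: "a<b \<Longrightarrow> b<c \<Longrightarrow> a'<b' \<Longrightarrow> b'<(c'::nat) \<Longrightarrow> {a,b,c}={a',b',c'} \<Longrightarrow> (a,b,c)=(a',b',c')"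
  by (simp add: set_eq_iff) (metis less_asym less_trans)

lemma set_AT: "set AT = {(x,y,z). x<y \<and> y<z \<and> z<16 \<and> 6\<le>z}"
  unfolding AT_def
  apply (rule set_eqI)
  apply (simp del: upt_Suc add: image_iff)
  apply (rule iffI)
   apply force
  apply clarify
  apply (rule_tac x=a in bexI)
   apply (rule_tac x=aa in bexI)
    apply auto
  done

lemma srt_inj:
  assumes "good t" "good u" "tri t = tri u" shows "srt t = srt u"
proof -
  obtain a b c where t: "srt t = (a,b,c)" by (cases "srt t") auto
  obtain a' b' c' where u: "srt u = (a',b',c')" by (cases "srt u") auto
  from srt_good[OF assms(1) t] srt_good[OF assms(2) u] assms(3)
  have "(a,b,c) = (a',b',c')" by (intro sorted_tri_eq) (auto simp: tri_def)
  then show ?thesis using t u by simp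
qed

lemma cover_distinct:
  defines "ET \<equiv> concat (map edgesT BL)"
  shows "distinct (map tri ET) \<and> tri ` set ET = tri ` set AT"
proof -
  have gd: "\<And>t. t \<in> set ET \<Longrightarrow> good t" using c5 unfolding ET_def list_all_iff by auto
  have st0: "set (map (enc \<circ> srt) ET) = set (map enc AT)"
    "length (map (enc \<circ> srt) ET) = length (map enc AT)"
    using chk set_length_msort unfolding ET_def by metis+
  have d1: "distinct (map (enc \<circ> srt) ET)"
    using distinct_AT st0 by (metis card_distinct distinct_card)
  have st: "(enc \<circ> srt) ` set ET = enc ` set AT"
    using st0 by simp
  have injt: "inj_on tri (set ET)"
  proof (rule inj_onI)
    fix t u assume "t \<in> set ET" "u \<in> set ET" "tri t = tri u"
    then have "srt t = srt u" using srt_inj gd by blast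
    then have "(enc \<circ> srt) t = (enc \<circ> srt) u" by simp
    then show "t = u" using d1 \<open>t \<in> set ET\<close> \<open>u \<in> set ET\<close> by (auto simp: distinct_map inj_on_def)
  qed
  have dist: "distinct (map tri ET)" using d1 injt by (simp add: distinct_map)
  have atb: "\<And>s. s \<in> set AT \<Longrightarrow> (case s of (a,b,c) \<Rightarrow> a<b \<and> b<c \<and> c<16)"
    using set_AT by auto
  have key: "\<And>t s. t \<in> set ET \<Longrightarrow> s \<in> set AT \<Longrightarrow> enc (srt t) = enc s \<Longrightarrow> tri t = tri s"
  proof -
    fix t s assume t: "t \<in> set ET" and s: "s \<in> set AT" and e: "enc (srt t) = enc s"
    obtain a b c where abc: "srt t = (a,b,c)" by (cases "srt t") auto
    obtain a' b' c' where s': "s = (a',b',c')" by (cases s) auto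
    have "(a,b,c) = (a',b',c')"
      using enc_inj[of b c b' c' a a'] srt_good[OF gd[OF t] abc] atb[OF s] e abc s' by auto
    then show "tri t = tri s" using srt_good[OF gd[OF t] abc] s' by simp
  qed
  have "tri ` set ET \<subseteq> tri ` set AT"
  proof
    fix T assume "T \<in> tri ` set ET"
    then obtain t where t: "t \<in> set ET" "T = tri t" by auto
    then have "enc (srt t) \<in> enc ` set AT" using st by auto
    then obtain s where "s \<in> set AT" "enc (srt t) = enc s" by auto
    then show "T \<in> tri ` set AT" using key t by auto
  qed
  moreover have "tri ` set AT \<subseteq> tri ` set ET"
  proof
    fix T assume "T \<in> tri ` set AT"
    then obtain s where s: "s \<in> set AT" "T = tri s" by auto
    then have "enc s \<in> (enc \<circ> srt) ` set ET" using st by auto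
    then obtain t where "t \<in> set ET" "enc (srt t) = enc s" by auto
    then show "T \<in> tri ` set ET" using key s by (metis image_eqI)
  qed
  ultimately show ?thesis using dist by blast
qed

lemma hole_AT: "hole_triples {0..<16} {0..<6} = tri ` set AT"
proof
  show "hole_triples {0..<16} {0..<6} \<subseteq> tri ` set AT"
  proof
    fix T :: "nat set" assume "T \<in> hole_triples {0..<16} {0..<6}"
    then have T: "T \<subseteq> {0..<16}" "card T = 3" "\<not> T \<subseteq> {0..<6}" by (auto simp: hole_triples_def)
    then obtain x y z where xyz: "T = {x,y,z}" "x \<noteq> y" "y \<noteq> z" "x \<noteq> z" by (auto simp: card_3_iff)
    have g: "good (x,y,z)" using xyz T(1) by auto
    obtain a b c where abc: "srt (x,y,z) = (a,b,c)" by (cases "srt (x,y,z)") auto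
    note sg = srt_good[OF g abc]
    have Teq: "T = {a,b,c}" using sg xyz by (simp add: tri_def)
    have "6 \<le> c"
    proof (rule ccontr)
      assume "\<not> 6 \<le> c"
      then have "{a,b,c} \<subseteq> {0..<6}" using sg by auto
      then show False using T(3) Teq by simp
    qed
    then have "(a,b,c) \<in> set AT" using sg set_AT by auto
    moreover have "T = tri (a,b,c)" using sg xyz by (simp add: tri_def)
    ultimately show "T \<in> tri ` set AT" by blast
  qed
next
  show "tri ` set AT \<subseteq> hole_triples {0..<16} {0..<6}"
  proof
    fix T assume "T \<in> tri ` set AT"
    then obtain a b c where "(a,b,c) \<in> set AT" "T = {a,b,c}" by (auto simp: tri_def)
    then have "a<b" "b<c" "c<16" "6\<le>c" "T = {a,b,c}" using set_AT by auto
    then show "T \<in> hole_triples {0..<16} {0..<6}" by (auto simp: hole_triples_def card_insert_if)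
  qed
qed

lemma block_ok:
  assumes "goodB bk" shows "is_K4e_block {0..<16} (set (map tri (edgesT bk)))"
proof -
  obtain a b c d e where bk: "bk = (a,b,c,d,e)" by (cases bk) auto
  have g: "distinct [a,b,c,d,e]" "a<16" "b<16" "c<16" "d<16" "e<16" using assms bk by auto
  define f where "f = (\<lambda>i::nat. if i=1 then a else if i=2 then b else if i=3 then c else if i=4 then d else e)"
  have I: "{1..5::nat} = {1,2,3,4,5}" by auto
  have "inj_on f {1..5}" unfolding I using g by (auto simp: inj_on_def f_def)
  moreover have "f ` {1..5} \<subseteq> {0..<16}" unfolding I using g by (auto simp: f_def)
  moreover have "set (map tri (edgesT bk)) = (\<lambda>e. f ` e) ` K4e_edges"
    by (simp add: bk tri_def K4e_edges_def f_def insert_commute)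
  ultimately show ?thesis unfolding is_K4e_block_def by blast
qed

theorem lemma3p8:
  shows "\<exists>(V::nat set) S B. is_HS_K4e V S B 16 6"
proof -
  define B where "B = (\<lambda>bk. set (map tri (edgesT bk))) ` set BL"
  have cd: "distinct (map tri (concat (map edgesT BL)))" "tri ` set (concat (map edgesT BL)) = tri ` set AT"
    using cover_distinct by auto
  have dc: "distinct (concat (map (\<lambda>bk. map tri (edgesT bk)) BL))"
    using cd(1) by (simp add: map_concat comp_def)
  have blocks: "\<forall>E\<in>B. is_K4e_block {0..<16} E"
    using c6 block_ok by (auto simp: B_def list_all_iff)
  have disj: "\<forall>E1\<in>B. \<forall>E2\<in>B. E1 \<noteq> E2 \<longrightarrow> E1 \<inter> E2 = {}"
  proof (intro ballI impI)
    fix E1 E2 assume "E1 \<in> B" "E2 \<in> B" "E1 \<noteq> E2"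
    then obtain b1 b2 where b: "b1 \<in> set BL" "b2 \<in> set BL" "E1 = set (map tri (edgesT b1))" "E2 = set (map tri (edgesT b2))"
      unfolding B_def by (meson imageE)
    have m: "map tri (edgesT b1) \<in> set (map (\<lambda>bk. map tri (edgesT bk)) BL)"
            "map tri (edgesT b2) \<in> set (map (\<lambda>bk. map tri (edgesT bk)) BL)"
      using b by auto
    have ne: "map tri (edgesT b1) \<noteq> map tri (edgesT b2)" using b \<open>E1 \<noteq> E2\<close> by metis
    have "set (map tri (edgesT b1)) \<inter> set (map tri (edgesT b2)) = {}"
      using dc m ne unfolding distinct_concat_iff by blast
    then show "E1 \<inter> E2 = {}" using b by simp
  qed
  have "\<Union>B = tri ` set (concat (map edgesT BL))"
    unfolding B_def by (simp add: image_UN)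
  then have un: "\<Union>B = hole_triples {0..<16} {0..<6}"
    using cd(2) hole_AT by simp
  have "is_HS_K4e {0..<16} {0..<6} B 16 6"
    unfolding is_HS_K4e_def using blocks disj un by auto
  then show ?thesis by blast
qed

end
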